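(* Let $R,\mu$ be positive integers with $\mu<R$. (i) For all elements $\lambda$ of an orbit under $G_{R,\mu}$, the values $\mathrm P^+_{R,\mu}(\lambda)$ are identical; the same holds for any orbit under $G^\oplus_{R,\mu}$. (ii) If $\mathbb Z_R$ is a single orbit under $G_{R,\mu}$, then $\mathrm P^+_{R,\mu}(\lambda)=\frac1\mu\binom{R-1}{\mu-1}$ for all $\lambda\in\mathbb Z_R$.
   Context: $\mathbb Z_R$ is the ring of integers modulo $R$, $\mathbb Z_R^*$ its group of units. $\mathrm P^+_{R,\mu}(\lambda)$ is the number of $\mu$-element subsets of $\mathbb Z_R$ whose elements sum to $\lambda$ in $\mathbb Z_R$. $G_{R,\mu}$ is the group of maps $\lambda\mapsto\lambda\ell+u\mu$ on $\mathbb Z_R$ with $\ell\in\mathbb Z_R^*$, $u\in\{0,\dots,R-1\}$; $G^\oplus_{R,\mu}$ is its subgroup with $\ell=1$. An orbit is an equivalence class of $\mathbb Z_R$ under "$\lambda_2=\lambda_1\varphi$ for some $\varphi$ in the group". *)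

theory Defs
  imports Complex_Main
begin

text \<open>Z_R is represented by the residues {0..<R} of nat, with arithmetic mod R.\<close>

definition Pplus :: "nat \<Rightarrow> nat \<Rightarrow> nat \<Rightarrow> nat" where
  "Pplus R mu l = card {S. S \<subseteq> {0..<R} \<and> card S = mu \<and> (\<Sum>S) mod R = l mod R}"

definition Gaff :: "nat \<Rightarrow> nat \<Rightarrow> (nat \<Rightarrow> nat) set" where
  "Gaff R mu = {\<phi>. \<exists>ell u. ell < R \<and> coprime ell R \<and> u < R \<and>
                       \<phi> = (\<lambda>x. (x * ell + u * mu) mod R)}"

definition Gplus :: "nat \<Rightarrow> nat \<Rightarrow> (nat \<Rightarrow> nat) set" where
  "Gplus R mu = {\<phi>. \<exists>u. u < R \<and> \<phi> = (\<lambda>x. (x + u * mu) mod R)}"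

definition same_orbit :: "(nat \<Rightarrow> nat) set \<Rightarrow> nat \<Rightarrow> nat \<Rightarrow> bool" where
  "same_orbit G l1 l2 \<longleftrightarrow> (\<exists>\<phi>\<in>G. l2 = \<phi> l1)"

end

theory Submission
  imports Defs "HOL-Number_Theory.Number_Theory"
begin

lemma key:
  fixes R mu ell u l :: nat
  assumes R: "0 < R" and cop: "coprime ell R"
  shows "Pplus R mu l = Pplus R mu ((l*ell + u*mu) mod R)"
proof -
  define f where "f x = (x*ell + u) mod R" for x
  define A where "A l = {S. S \<subseteq> {0..<R} \<and> card S = mu \<and> (\<Sum>S) mod R = l mod R}" for l
  have injf: "inj_on f {0..<R}"
  proof
    fix x y assume xy: "x \<in> {0..<R}" "y \<in> {0..<R}" "f x = f y"
    then have "[x*ell + u = y*ell + u] (mod R)" by (simp add: f_def cong_def)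
    then have "[x*ell = y*ell] (mod R)" using cong_add_rcancel_nat by blast
    then have "[x = y] (mod R)" using cop cong_mult_rcancel_nat by blast
    then show "x = y" using xy by (simp add: cong_def)
  qed
  have into: "f ` {0..<R} \<subseteq> {0..<R}" using R by (auto simp: f_def)
  have surj: "f ` {0..<R} = {0..<R}"
    using endo_inj_surj[OF _ into injf] by simp
  have sumf: "(\<Sum>(f ` S)) mod R = (\<Sum>S * ell + card S * u) mod R"
    if "S \<subseteq> {0..<R}" for S
  proof -
    have "inj_on f S" using injf that inj_on_subset by blast
    then have "\<Sum>(f ` S) = (\<Sum>x\<in>S. f x)" by (simp add: sum.reindex)
    then have "(\<Sum>(f ` S)) mod R = (\<Sum>x\<in>S. (x*ell+u) mod R) mod R" by (simp add: f_def)
    also have "\<dots> = (\<Sum>x\<in>S. x*ell+u) mod R" by (rule mod_sum_eq)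
    also have "(\<Sum>x\<in>S. x*ell+u) = \<Sum>S * ell + card S * u"
      by (simp add: sum.distrib sum_distrib_right)
    finally show ?thesis .
  qed
  define l2 where "l2 = (l*ell + u*mu) mod R"
  have img: "(`) f ` A l = A l2"
  proof
    show "(`) f ` A l \<subseteq> A l2"
    proof
      fix T assume "T \<in> (`) f ` A l"
      then obtain S where S: "S \<in> A l" and T: "T = f ` S" by blast
      have Ssub: "S \<subseteq> {0..<R}" and cS: "card S = mu" and sS: "(\<Sum>S) mod R = l mod R"
        using S by (auto simp: A_def)
      have "T \<subseteq> {0..<R}" using T Ssub into by blast
      moreover have "card T = mu" using T cS inj_on_subset[OF injf Ssub] card_image by metis
      moreover have "(\<Sum>T) mod R = l2 mod R"
      proof -
        have "(\<Sum>T) mod R = (\<Sum>S * ell + mu * u) mod R" using sumf[OF Ssub] T cS by simp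
        also have "\<dots> = ((\<Sum>S mod R) * ell + mu * u) mod R" by (metis mod_add_left_eq mod_mult_left_eq)
        also have "\<dots> = ((l mod R) * ell + mu * u) mod R" using sS by simp
        also have "\<dots> = l2 mod R" unfolding l2_def by (metis mod_add_left_eq mod_mult_left_eq mod_mod_trivial mult.commute)
        finally show ?thesis .
      qed
      ultimately show "T \<in> A l2" by (simp add: A_def)
    qed
  next
    show "A l2 \<subseteq> (`) f ` A l"
    proof
      fix T assume T: "T \<in> A l2"
      have Tsub: "T \<subseteq> {0..<R}" and cT: "card T = mu" and sT: "(\<Sum>T) mod R = l2 mod R"
        using T by (auto simp: A_def)
      define S where "S = {x\<in>{0..<R}. f x \<in> T}"
      have Ssub: "S \<subseteq> {0..<R}" by (auto simp: S_def)
      have fS: "f ` S = T"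
      proof
        show "f ` S \<subseteq> T" by (auto simp: S_def)
        show "T \<subseteq> f ` S"
        proof
          fix y assume "y \<in> T"
          then have "y \<in> f ` {0..<R}" using Tsub surj by blast
          then obtain x where "x \<in> {0..<R}" "y = f x" by blast
          then show "y \<in> f ` S" using \<open>y \<in> T\<close> by (auto simp: S_def)
        qed
      qed
      have cS: "card S = mu" using fS cT inj_on_subset[OF injf Ssub] card_image by metis
      have "(\<Sum>S * ell + mu * u) mod R = (l * ell + mu * u) mod R"
        using sumf[OF Ssub] fS cS sT by (simp add: l2_def mult.commute)
      then have "[\<Sum>S * ell + mu * u = l * ell + mu * u] (mod R)" by (simp add: cong_def)
      then have "[\<Sum>S * ell = l * ell] (mod R)" using cong_add_rcancel_nat by blast
      then have "[\<Sum>S = l] (mod R)" using cop cong_mult_rcancel_nat by blast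
      then have "S \<in> A l" using Ssub cS by (simp add: A_def cong_def)
      then show "T \<in> (`) f ` A l" using fS by blast
    qed
  qed
  have "inj_on ((`) f) (A l)"
    by (rule inj_on_subset[OF inj_on_image[of f "Pow {0..<R}"]]) (auto simp: A_def injf)
  then have "card (A l) = card (A l2)" using img card_image by metis
  then show ?thesis by (simp add: Pplus_def A_def l2_def)
qed

lemma total:
  fixes R mu :: nat
  assumes "0 < R"
  shows "(\<Sum>l<R. Pplus R mu l) = R choose mu"
proof -
  define A where "A l = {S. S \<subseteq> {0..<R} \<and> card S = mu \<and> (\<Sum>S) mod R = l mod R}" for l
  have eq: "{S. S \<subseteq> {0..<R} \<and> card S = mu} = (\<Union>l\<in>{..<R}. A l)"
    using assms by (auto simp: A_def)
  have "card (\<Union>l\<in>{..<R}. A l) = (\<Sum>l<R. card (A l))"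
    by (rule card_UN_disjoint) (auto simp: A_def intro: finite_subset[of _ "Pow {0..<R}"])
  moreover have "card {S. S \<subseteq> {0..<R} \<and> card S = mu} = R choose mu"
    using n_subsets[of "{0..<R}" mu] by simp
  ultimately show ?thesis using eq by (simp add: Pplus_def A_def)
qed

theorem theorem4p6:
  fixes R mu :: nat
  assumes "0 < mu" and "mu < R"
  shows "(\<forall>l1 l2. l1 < R \<longrightarrow> l2 < R \<longrightarrow> same_orbit (Gaff R mu) l1 l2
            \<longrightarrow> Pplus R mu l1 = Pplus R mu l2)
       \<and> (\<forall>l1 l2. l1 < R \<longrightarrow> l2 < R \<longrightarrow> same_orbit (Gplus R mu) l1 l2
            \<longrightarrow> Pplus R mu l1 = Pplus R mu l2)
       \<and> ((\<forall>l1 l2. l1 < R \<longrightarrow> l2 < R \<longrightarrow> same_orbit (Gaff R mu) l1 l2)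
            \<longrightarrow> (\<forall>l < R. real (Pplus R mu l) = real ((R - 1) choose (mu - 1)) / real mu))"
proof -
  have R: "0 < R" using assms by simp
  have P1: "Pplus R mu l1 = Pplus R mu l2" if so: "same_orbit (Gaff R mu) l1 l2" for l1 l2
  proof -
    obtain \<phi> where ph: "\<phi> \<in> Gaff R mu" "l2 = \<phi> l1" using so unfolding same_orbit_def by blast
    then obtain ell u where "coprime ell R" "\<phi> = (\<lambda>x. (x * ell + u * mu) mod R)"
      unfolding Gaff_def by blast
    with ph have cop: "coprime ell R" and l2: "l2 = (l1 * ell + u * mu) mod R" by auto
    show ?thesis unfolding l2 by (rule key[OF R cop])
  qed
  have P2: "Pplus R mu l1 = Pplus R mu l2" if so: "same_orbit (Gplus R mu) l1 l2" for l1 l2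
  proof -
    obtain \<phi> where ph: "\<phi> \<in> Gplus R mu" "l2 = \<phi> l1" using so unfolding same_orbit_def by blast
    then obtain u where "\<phi> = (\<lambda>x. (x + u * mu) mod R)"
      unfolding Gplus_def by blast
    with ph have "l2 = (l1 * 1 + u * mu) mod R" by simp
    then show ?thesis using key[OF R, where ell=1 and u=u and l=l1 and mu=mu] by simp
  qed
  have P3: "real (Pplus R mu l) = real ((R - 1) choose (mu - 1)) / real mu"
    if all: "\<forall>l1 l2. l1 < R \<longrightarrow> l2 < R \<longrightarrow> same_orbit (Gaff R mu) l1 l2" and l: "l < R" for l
  proof -
    have c: "Pplus R mu k = Pplus R mu 0" if "k < R" for k
    proof -
      have "same_orbit (Gaff R mu) k 0" using all that R by blast
      then show ?thesis by (rule P1)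
    qed
    have "(\<Sum>k<R. Pplus R mu k) = (\<Sum>k<R. Pplus R mu 0)"
      by (rule sum.cong) (auto intro: c)
    then have "(\<Sum>k<R. Pplus R mu k) = R * Pplus R mu 0" by simp
    then have h1: "R * Pplus R mu 0 = R choose mu" using total[OF R, of mu] by linarith
    obtain n k where nk: "R = Suc n" "mu = Suc k" using R assms(1) by (metis gr0_implies_Suc)
    have h2: "R * ((R-1) choose (mu-1)) = (R choose mu) * mu"
      unfolding nk using Suc_times_binomial_eq[of n k] by simp
    have "R * ((R-1) choose (mu-1)) = R * (Pplus R mu 0 * mu)"
      unfolding h2 h1[symmetric] by (simp only: mult.assoc)
    then have e: "(R-1) choose (mu-1) = Pplus R mu 0 * mu" using R by (metis mult_left_cancel not_gr0)
    have "real ((R-1) choose (mu-1)) = real (Pplus R mu 0) * real mu" unfolding e by (rule of_nat_mult)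
    moreover have "real mu \<noteq> 0" using assms(1) by simp
    ultimately have "real (Pplus R mu 0) = real ((R-1) choose (mu-1)) / real mu" by (simp add: field_simps)
    then show ?thesis using c[OF l] by simp
  qed
  show ?thesis
  proof (intro conjI allI impI)
    fix l1 l2 assume "same_orbit (Gaff R mu) l1 l2" then show "Pplus R mu l1 = Pplus R mu l2" by (rule P1)
  next
    fix l1 l2 assume "same_orbit (Gplus R mu) l1 l2" then show "Pplus R mu l1 = Pplus R mu l2" by (rule P2)
  next
    fix l assume "\<forall>l1 l2. l1 < R \<longrightarrow> l2 < R \<longrightarrow> same_orbit (Gaff R mu) l1 l2" "l < R"
    then show "real (Pplus R mu l) = real ((R - 1) choose (mu - 1)) / real mu" by (rule P3)
  qed
qed

end
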